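(* Fix $i\in[n]$, arbitrary bid profiles $\mathbf{b}_{-i}^{(1)},\dots,\mathbf{b}_{-i}^{(T)}\in B^{n-1}$, and auction formats $\mathcal{M}^{(1)},\dots,\mathcal{M}^{(T)}$ all satisfying allocation monotonicity. Then \[ \max_{s\in\mathcal{S}}\sum_{t\in[T]}u_i^{(t)}(s)=\max_{s\in\mathcal{S}^\dagger}\sum_{t\in[T]}u_i^{(t)}(s). \] Consequently, for any strategies $s_i^{(1)},\dots,s_i^{(T)}\in\mathcal{S}$, $\mathrm{Reg}_i^\dagger=\mathrm{Reg}_i$, where $\mathrm{Reg}_i:=\max_{s\in\mathcal{S}}\sum_t(u_i^{(t)}(s)-u_i^{(t)}(s_i^{(t)}))$ and $\mathrm{Reg}_i^\dagger:=\max_{s\in\mathcal{S}^\dagger}\sum_t(u_i^{(t)}(s)-u_i^{(t)}(s_i^{(t)}))$.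
   Context: Bidder $i$'s value $v_i\in[0,1]$ is drawn from a continuous distribution $\mathcal{D}_i$ on $[0,1]$. The bid set is $B:=\{j/K: j=0,\dots,K\}$. $\mathcal{S}$ is the set of all (measurable) functions $s:[0,1]\to B$ and $\mathcal{S}^\dagger\subseteq\mathcal{S}$ the monotone ones ($v\le v'\Rightarrow s(v)\le s(v')$). An auction format is $\mathcal{M}^{(t)}=(\mathbf{x}^{(t)},\mathbf{p}^{(t)})$ with $\mathbf{x}^{(t)}:B^n\to\Delta([n])$ (nonnegative entries summing to at most 1) and $\mathbf{p}^{(t)}:B^n\to[0,1]^n$. Allocation monotonicity: for all $i$, $\mathbf{b}_{-i}\in B^{n-1}$ and $b_i\le b_i'$ in $B$, $x_i^{(t)}(b_i,\mathbf{b}_{-i})\le x_i^{(t)}(b_i',\mathbf{b}_{-i})$. Utility: $u_i^{(t)}(s):=\mathbb{E}_{v_i\sim\mathcal{D}_i}[x_i^{(t)}(s(v_i),\mathbf{b}_{-i}^{(t)})v_i-p_i^{(t)}(s(v_i),\mathbf{b}_{-i}^{(t)})]$. *)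

theory Defs
  imports "HOL-Probability.Probability"
begin

definition bidset :: "nat \<Rightarrow> real set" where
  "bidset K = {real j / real K | j. j \<le> K}"

definition strategies :: "nat \<Rightarrow> (real \<Rightarrow> real) set" where
  "strategies K = {s. s \<in> borel_measurable borel \<and> (\<forall>v. s v \<in> bidset K)}"

definition mono_strategies :: "nat \<Rightarrow> (real \<Rightarrow> real) set" where
  "mono_strategies K = {s \<in> strategies K. \<forall>v\<in>{0..1}. \<forall>v'\<in>{0..1}. v \<le> v' \<longrightarrow> s v \<le> s v'}"

definition bid_profile :: "nat \<Rightarrow> nat \<Rightarrow> (nat \<Rightarrow> real) \<Rightarrow> bool" where
  "bid_profile K n b \<longleftrightarrow> (\<forall>j<n. b j \<in> bidset K)"

definition others_profile :: "nat \<Rightarrow> nat \<Rightarrow> nat \<Rightarrow> (nat \<Rightarrow> real) \<Rightarrow> bool" where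
  "others_profile K n i b \<longleftrightarrow> (\<forall>j<n. j \<noteq> i \<longrightarrow> b j \<in> bidset K)"

definition auction_format :: "nat \<Rightarrow> nat \<Rightarrow> ((nat \<Rightarrow> real) \<Rightarrow> nat \<Rightarrow> real)
     \<Rightarrow> ((nat \<Rightarrow> real) \<Rightarrow> nat \<Rightarrow> real) \<Rightarrow> bool" where
  "auction_format K n x p \<longleftrightarrow>
     (\<forall>b. bid_profile K n b \<longrightarrow>
        (\<forall>j<n. 0 \<le> x b j) \<and> (\<Sum>j<n. x b j) \<le> 1 \<and> (\<forall>j<n. 0 \<le> p b j \<and> p b j \<le> 1))"

definition alloc_monotone :: "nat \<Rightarrow> nat \<Rightarrow> ((nat \<Rightarrow> real) \<Rightarrow> nat \<Rightarrow> real) \<Rightarrow> bool" where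
  "alloc_monotone K n x \<longleftrightarrow>
     (\<forall>j<n. \<forall>b. bid_profile K n b \<longrightarrow>
        (\<forall>c\<in>bidset K. \<forall>c'\<in>bidset K. c \<le> c' \<longrightarrow> x (b(j := c)) j \<le> x (b(j := c')) j))"

definition continuous_dist_01 :: "real measure \<Rightarrow> bool" where
  "continuous_dist_01 D \<longleftrightarrow> prob_space D \<and> sets D = sets borel \<and>
     measure D {0..1} = 1 \<and> (\<forall>v. measure D {v} = 0)"

definition utility :: "real measure \<Rightarrow> ((nat \<Rightarrow> real) \<Rightarrow> nat \<Rightarrow> real)
     \<Rightarrow> ((nat \<Rightarrow> real) \<Rightarrow> nat \<Rightarrow> real) \<Rightarrow> nat \<Rightarrow> (nat \<Rightarrow> real) \<Rightarrow> (real \<Rightarrow> real) \<Rightarrow> real" where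
  "utility D x p i bmi s =
     (\<integral>v. x (bmi(i := s v)) i * v - p (bmi(i := s v)) i \<partial>D)"

end

theory Submission imports Defs begin

lemma bidset_finite: "finite (bidset K)"
proof -
  have "bidset K = (\<lambda>j. real j / real K) ` {..K}" unfolding bidset_def by auto
  thus ?thesis by simp
qed

lemma bidset_ne: "0 \<in> bidset K"
  unfolding bidset_def by force

lemma comp_meas:
  fixes h :: "real \<Rightarrow> real"
  assumes "s \<in> borel_measurable borel" "\<And>v. s v \<in> bidset K"
  shows "(\<lambda>v. h (s v)) \<in> borel_measurable borel"
proof -
  have eq: "(\<lambda>v. h (s v)) = (\<lambda>v. \<Sum>c\<in>bidset K. h c * indicator (s -` {c}) v)"
  proof
    fix v
    have "(\<Sum>c\<in>bidset K. h c * indicator (s -` {c}) v) = (\<Sum>c\<in>bidset K. if s v = c then h c else 0)"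
      by (rule sum.cong) (auto simp: indicator_def)
    also have "\<dots> = h (s v)" using assms(2)[of v] bidset_finite[of K] by (simp add: sum.delta)
    finally show "h (s v) = (\<Sum>c\<in>bidset K. h c * indicator (s -` {c}) v)" by simp
  qed
  have "\<And>c. s -` {c} \<in> sets borel"
  proof -
    fix c
    have "s -` {c} \<inter> space borel \<in> sets borel" using assms(1) by (rule measurable_sets) simp
    thus "s -` {c} \<in> sets borel" by simp
  qed
  then show ?thesis unfolding eq by (intro borel_measurable_sum borel_measurable_times) auto
qed

lemma integ:
  fixes h g :: "real \<Rightarrow> real"
  assumes D: "continuous_dist_01 D"
    and s: "s \<in> strategies K"
    and h: "\<And>c. c \<in> bidset K \<Longrightarrow> \<bar>h c\<bar> \<le> 1"
    and g: "\<And>c. c \<in> bidset K \<Longrightarrow> \<bar>g c\<bar> \<le> 1"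
  shows "integrable D (\<lambda>v. h (s v) * v - g (s v))"
proof -
  interpret prob_space D using D unfolding continuous_dist_01_def by simp
  have sets: "sets D = sets borel" using D unfolding continuous_dist_01_def by simp
  have sm: "s \<in> borel_measurable borel" "\<And>v. s v \<in> bidset K" using s unfolding strategies_def by auto
  have mb: "(\<lambda>v. h (s v) * v - g (s v)) \<in> borel_measurable borel"
    using comp_meas[OF sm, of h] comp_meas[OF sm, of g] by measurable
  hence m: "(\<lambda>v. h (s v) * v - g (s v)) \<in> borel_measurable D"
    by (subst measurable_cong_sets[OF sets refl]) (rule mb)
  have "AE v in D. v \<in> {0..1}"
    using D unfolding continuous_dist_01_def by (subst AE_in_set_eq_1) (auto simp: sets)
  hence ae: "AE v in D. norm (h (s v) * v - g (s v)) \<le> norm (2::real)"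
  proof (rule AE_mp, intro AE_I2 impI)
    fix v :: real assume v: "v \<in> {0..1}"
    have "\<bar>h (s v) * v\<bar> \<le> 1" using h[OF sm(2)] v by (simp add: abs_mult mult_le_one)
    moreover have "\<bar>g (s v)\<bar> \<le> 1" using g[OF sm(2)] .
    ultimately show "norm (h (s v) * v - g (s v)) \<le> norm (2::real)" by simp
  qed
  show ?thesis by (rule Bochner_Integration.integrable_bound[OF integrable_const m ae])
qed

lemma sup_max:
  fixes f :: "'a \<Rightarrow> real"
  assumes "z \<in> S" "\<And>s. s \<in> S \<Longrightarrow> f s \<le> f z"
  shows "(SUP s\<in>S. f s) = f z"
  using assms by (intro cSup_eq_maximum) auto

theorem mainTheorem3:
  fixes K n i T :: nat
    and D :: "real measure"
    and bmi :: "nat \<Rightarrow> nat \<Rightarrow> real"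
    and x p :: "nat \<Rightarrow> (nat \<Rightarrow> real) \<Rightarrow> nat \<Rightarrow> real"
  assumes K: "K \<ge> 1"
    and i: "i < n"
    and D: "continuous_dist_01 D"
    and bmi: "\<And>t. t < T \<Longrightarrow> others_profile K n i (bmi t)"
    and fmt: "\<And>t. t < T \<Longrightarrow> auction_format K n (x t) (p t)"
    and mono: "\<And>t. t < T \<Longrightarrow> alloc_monotone K n (x t)"
  defines "U \<equiv> \<lambda>s. \<Sum>t<T. utility D (x t) (p t) i (bmi t) s"
  shows "(\<exists>s\<in>strategies K. \<forall>s'\<in>strategies K. U s' \<le> U s)
       \<and> (\<exists>s\<in>mono_strategies K. \<forall>s'\<in>mono_strategies K. U s' \<le> U s)
       \<and> (SUP s\<in>strategies K. U s) = (SUP s\<in>mono_strategies K. U s)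
       \<and> (\<forall>ss :: nat \<Rightarrow> real \<Rightarrow> real. (\<forall>t<T. ss t \<in> strategies K) \<longrightarrow>
            (SUP s\<in>mono_strategies K. \<Sum>t<T. utility D (x t) (p t) i (bmi t) s
                                             - utility D (x t) (p t) i (bmi t) (ss t))
          = (SUP s\<in>strategies K. \<Sum>t<T. utility D (x t) (p t) i (bmi t) s
                                             - utility D (x t) (p t) i (bmi t) (ss t)))"
proof -
  define B where "B = bidset K"
  define X where "X t c = x t ((bmi t)(i := c)) i" for t c
  define P where "P t c = p t ((bmi t)(i := c)) i" for t c
  have prof: "bid_profile K n ((bmi t)(i := c))" if "t < T" "c \<in> B" for t c
    using bmi[OF that(1)] that(2) unfolding bid_profile_def others_profile_def B_def by auto
  have XP: "0 \<le> X t c \<and> X t c \<le> 1 \<and> 0 \<le> P t c \<and> P t c \<le> 1" if "t < T" "c \<in> B" for t c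
  proof -
    let ?b = "(bmi t)(i := c)"
    have f: "\<forall>j<n. 0 \<le> x t ?b j" "(\<Sum>j<n. x t ?b j) \<le> 1" "\<forall>j<n. 0 \<le> p t ?b j \<and> p t ?b j \<le> 1"
      using fmt[OF that(1)] prof[OF that] unfolding auction_format_def by blast+
    have "x t ?b i \<le> (\<Sum>j<n. x t ?b j)" using f(1) i by (intro member_le_sum) auto
    thus ?thesis using f i unfolding X_def P_def by auto
  qed
  have Xm: "X t c \<le> X t c'" if "t < T" "c \<in> B" "c' \<in> B" "c \<le> c'" for t c c'
  proof -
    have "x t (((bmi t)(i := c))(i := c)) i \<le> x t (((bmi t)(i := c))(i := c')) i"
      using mono[OF that(1)] prof[OF that(1,2)] i that(2-4) unfolding alloc_monotone_def B_def by blast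
    thus ?thesis unfolding X_def by simp
  qed
  define A where "A c = (\<Sum>t<T. X t c)" for c
  define Q where "Q c = (\<Sum>t<T. P t c)" for c
  define G where "G c v = (\<Sum>t<T. X t c * v - P t c)" for c v
  have GAQ: "G c v = A c * v - Q c" for c v
    unfolding G_def A_def Q_def by (simp add: sum_subtractf sum_distrib_right)
  have Am: "A c \<le> A c'" if "c \<in> B" "c' \<in> B" "c \<le> c'" for c c'
    unfolding A_def using Xm that by (intro sum_mono) auto
  have finB: "finite B" unfolding B_def by (rule bidset_finite)
  have neB: "B \<noteq> {}" unfolding B_def using bidset_ne by blast
  define Opt where "Opt v = {c\<in>B. \<forall>c'\<in>B. G c' v \<le> G c v}" for v
  have Opt_ne: "Opt v \<noteq> {}" for v
  proof -
    let ?M = "Max ((\<lambda>c. G c v) ` B)"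
    have "?M \<in> (\<lambda>c. G c v) ` B" using finB neB by (intro Max_in) auto
    then obtain c where c: "c \<in> B" "G c v = ?M" by auto
    have "\<forall>c'\<in>B. G c' v \<le> G c v" unfolding c(2) using finB by (intro ballI Max_ge) auto
    thus ?thesis using c(1) unfolding Opt_def by blast
  qed
  have finOpt: "finite (Opt v)" for v unfolding Opt_def using finB by simp
  define so where "so v = Max (Opt v)" for v
  have so_in: "so v \<in> Opt v" for v unfolding so_def using finOpt Opt_ne by (rule Max_in)
  have so_B: "so v \<in> B" for v using so_in[of v] unfolding Opt_def by blast
  have so_opt: "G c v \<le> G (so v) v" if "c \<in> B" for c v using so_in[of v] that unfolding Opt_def by blast
  have so_mono: "mono so"
  proof (rule monoI, rule ccontr)
    fix v v' :: real assume vv: "v \<le> v'" and nle: "\<not> so v \<le> so v'"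
    let ?c = "so v" and ?c' = "so v'"
    have lt: "?c' < ?c" using nle by simp
    have "?c \<notin> Opt v'"
    proof
      assume "?c \<in> Opt v'"
      hence "?c \<le> so v'" unfolding so_def using finOpt[of v'] by (simp add: Max_ge)
      thus False using lt by simp
    qed
    then obtain c'' where "c'' \<in> B" "G ?c v' < G c'' v'" using so_B[of v] unfolding Opt_def by force
    hence g1: "G ?c v' < G ?c' v'" using so_opt[of c'' v'] by simp
    have g2: "G ?c' v \<le> G ?c v" using so_opt[OF so_B[of v']] by simp
    have a: "A ?c' \<le> A ?c" using Am[OF so_B so_B] lt by simp
    have "(A ?c - A ?c') * (v - v') \<le> 0" using a vv by (intro mult_nonneg_nonpos) auto
    thus False using g1 g2 unfolding GAQ by (simp add: algebra_simps)
  qed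
  have so_ms: "so \<in> mono_strategies K"
    using borel_measurable_mono[OF so_mono] so_B so_mono
    unfolding mono_strategies_def strategies_def B_def by (auto simp: mono_def)
  have ms_s: "mono_strategies K \<subseteq> strategies K" unfolding mono_strategies_def by auto
  have so_s: "so \<in> strategies K" using so_ms ms_s by auto
  have integ_t: "integrable D (\<lambda>v. X t (s v) * v - P t (s v))" if "s \<in> strategies K" "t < T" for s t
    using integ[OF D that(1), of "X t" "P t"] XP[OF that(2)] unfolding B_def by auto
  have U_eq: "U s = (\<integral>v. G (s v) v \<partial>D)" if "s \<in> strategies K" for s
  proof -
    have "U s = (\<Sum>t<T. \<integral>v. X t (s v) * v - P t (s v) \<partial>D)"
      unfolding U_def utility_def X_def P_def by simp
    also have "\<dots> = (\<integral>v. (\<Sum>t<T. X t (s v) * v - P t (s v)) \<partial>D)"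
      using integ_t[OF that] by (intro Bochner_Integration.integral_sum[symmetric]) auto
    finally show ?thesis unfolding G_def .
  qed
  have opt: "U s \<le> U so" if "s \<in> strategies K" for s
  proof -
    have "(\<integral>v. G (s v) v \<partial>D) \<le> (\<integral>v. G (so v) v \<partial>D)"
      unfolding G_def
      using integ_t[OF that] integ_t[OF so_s] so_opt that
      by (intro Bochner_Integration.integral_mono Bochner_Integration.integrable_sum) (auto simp: G_def strategies_def B_def)
    thus ?thesis using U_eq[OF that] U_eq[OF so_s] by simp
  qed
  have sup1: "(SUP s\<in>strategies K. U s) = U so" 
  proof (rule sup_max[of so "strategies K" U])
    show "so \<in> strategies K" by (rule so_s)
    show "U s \<le> U so" if "s \<in> strategies K" for s using opt[OF that] .
  qed
  have sup2: "(SUP s\<in>mono_strategies K. U s) = U so" 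
  proof (rule sup_max[of so "mono_strategies K" U])
    show "so \<in> mono_strategies K" by (rule so_ms)
    show "U s \<le> U so" if "s \<in> mono_strategies K" for s using opt that ms_s by blast
  qed
  have reg: "(SUP s\<in>mono_strategies K. \<Sum>t<T. utility D (x t) (p t) i (bmi t) s
                                             - utility D (x t) (p t) i (bmi t) (ss t))
          = (SUP s\<in>strategies K. \<Sum>t<T. utility D (x t) (p t) i (bmi t) s
                                             - utility D (x t) (p t) i (bmi t) (ss t))" for ss
  proof -
    define C where "C = (\<Sum>t<T. utility D (x t) (p t) i (bmi t) (ss t))"
    have e: "(\<Sum>t<T. utility D (x t) (p t) i (bmi t) s - utility D (x t) (p t) i (bmi t) (ss t)) = U s - C" for s
      unfolding U_def C_def by (simp add: sum_subtractf)
    have "(SUP s\<in>mono_strategies K. U s - C) = U so - C"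
      using ms_s opt by (intro sup_max[OF so_ms]) auto
    moreover have "(SUP s\<in>strategies K. U s - C) = U so - C"
      using opt by (intro sup_max[OF so_s]) auto
    ultimately show ?thesis unfolding e by simp
  qed
  have o1: "\<forall>s'\<in>strategies K. U s' \<le> U so" using opt by blast
  have o2: "\<forall>s'\<in>mono_strategies K. U s' \<le> U so" using opt ms_s by blast
  show ?thesis
    apply (intro conjI allI impI)
       using o1 so_s apply blast
      using o2 so_ms apply blast
     apply (simp only: sup1 sup2)
    apply (rule reg)
    done
qed

end
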